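(* Consider the upper half-space model $\mathbb{H}^3=\{(x_1,x_2,x_3)\in\mathbb{R}^3: x_3>0\}$ with metric $g=\frac{1}{x_3^2}(dx_1^2+dx_2^2+dx_3^2)$. Let $E$ be a complete end of revolution in $\mathbb{H}^3$ about the $x_3$-axis, and suppose there is $c>0$ such that $E$ is contained on (i.e. in the closed region above) the $c$-cone, namely $E\subset\{x\in\mathbb{H}^3: x_3\ge c\sqrt{x_1^2+x_2^2}\}$. Then $E$ is parabolic.
   Context: The $c$-cone ($c>0$) is the surface obtained by rotating the curve $t\mapsto(t,0,ct)$, $t>0$, about the $x_3$-axis; it divides $\mathbb{H}^3$ into a part on (above) it and a part below it. A complete end of revolution about the $x_3$-axis is the set $E=\{(\gamma_1(s)\cos\theta,\gamma_1(s)\sin\theta,\gamma_2(s)): s\ge0,\ \theta\in[0,2\pi)\}$, where $\gamma(s)=(\gamma_1(s),0,\gamma_2(s))$, $s\in[0,\infty)$, is a smooth regular curve in the totally geodesic half-plane $\{x_2=0,x_1>0\}$ (so $\gamma_1>0$, $\gamma_2>0$) of infinite hyperbolic length; $E$ carries the metric induced by this immersion of $[0,\infty)\times\mathbb{S}^1$. An end $E$ is parabolic if every bounded harmonic function on $E$ is determined by its boundary values. *)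

theory Defs
  imports "HOL-Analysis.Analysis"
begin

definition H3 :: "(real \<times> real \<times> real) set" where
  "H3 = {(x1, x2, x3). x3 > 0}"

definition cone_region :: "real \<Rightarrow> (real \<times> real \<times> real) set" where
  "cone_region c = {(x1, x2, x3). x3 > 0 \<and> x3 \<ge> c * sqrt (x1\<^sup>2 + x2\<^sup>2)}"

text \<open>C-infinity on a set S (derivatives taken within S, so one-sided at endpoints).\<close>
definition smooth_on :: "real set \<Rightarrow> (real \<Rightarrow> real) \<Rightarrow> bool" where
  "smooth_on S f \<longleftrightarrow> (\<exists>D :: nat \<Rightarrow> real \<Rightarrow> real. D 0 = f \<and>
      (\<forall>n. \<forall>x\<in>S. (D n has_real_derivative D (Suc n) x) (at x within S)))"

text \<open>The profile curve in the half-plane {x2 = 0, x1 > 0}, written as (gamma1, gamma2).\<close>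
definition profile :: "(real \<Rightarrow> real) \<Rightarrow> (real \<Rightarrow> real) \<Rightarrow> real \<Rightarrow> real \<times> real" where
  "profile g1 g2 s = (g1 s, g2 s)"

definition profile_vel :: "(real \<Rightarrow> real) \<Rightarrow> (real \<Rightarrow> real) \<Rightarrow> real \<Rightarrow> real \<times> real" where
  "profile_vel g1 g2 s = vector_derivative (profile g1 g2) (at s within {0..})"

definition hyp_length_upto :: "(real \<Rightarrow> real) \<Rightarrow> (real \<Rightarrow> real) \<Rightarrow> real \<Rightarrow> real" where
  "hyp_length_upto g1 g2 T = integral {0..T} (\<lambda>s. norm (profile_vel g1 g2 s) / g2 s)"

text \<open>The immersion of [0,oo) x S^1 (theta taken in R, 2pi-periodic).\<close>
definition rev_immersion :: "(real \<Rightarrow> real) \<Rightarrow> (real \<Rightarrow> real) \<Rightarrow> real \<times> real \<Rightarrow> real \<times> real \<times> real" where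
  "rev_immersion g1 g2 p = (g1 (fst p) * cos (snd p), g1 (fst p) * sin (snd p), g2 (fst p))"

definition rev_end :: "(real \<Rightarrow> real) \<Rightarrow> (real \<Rightarrow> real) \<Rightarrow> (real \<times> real \<times> real) set" where
  "rev_end g1 g2 = rev_immersion g1 g2 ` ({0..} \<times> {0..<2*pi})"

definition pd1 :: "(real \<times> real \<Rightarrow> 'a::real_normed_vector) \<Rightarrow> real \<times> real \<Rightarrow> 'a" where
  "pd1 f p = vector_derivative (\<lambda>t. f (t, snd p)) (at (fst p))"

definition pd2 :: "(real \<times> real \<Rightarrow> 'a::real_normed_vector) \<Rightarrow> real \<times> real \<Rightarrow> 'a" where
  "pd2 f p = vector_derivative (\<lambda>t. f (fst p, t)) (at (snd p))"

text \<open>Coefficients of the pull-back of the hyperbolic metric (dx1^2+dx2^2+dx3^2)/x3^2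
  under an immersion X.\<close>
definition hyp_g11 :: "(real \<times> real \<Rightarrow> real \<times> real \<times> real) \<Rightarrow> real \<times> real \<Rightarrow> real" where
  "hyp_g11 X p = (pd1 X p \<bullet> pd1 X p) / (snd (snd (X p)))\<^sup>2"
definition hyp_g12 :: "(real \<times> real \<Rightarrow> real \<times> real \<times> real) \<Rightarrow> real \<times> real \<Rightarrow> real" where
  "hyp_g12 X p = (pd1 X p \<bullet> pd2 X p) / (snd (snd (X p)))\<^sup>2"
definition hyp_g22 :: "(real \<times> real \<Rightarrow> real \<times> real \<times> real) \<Rightarrow> real \<times> real \<Rightarrow> real" where
  "hyp_g22 X p = (pd2 X p \<bullet> pd2 X p) / (snd (snd (X p)))\<^sup>2"

text \<open>Laplace--Beltrami operator of the metric g11 ds^2 + 2 g12 ds dtheta + g22 dtheta^2: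
  (1/sqrt det g) d_i (sqrt det g g^{ij} d_j u).\<close>
definition laplace_beltrami ::
  "(real \<times> real \<Rightarrow> real) \<Rightarrow> (real \<times> real \<Rightarrow> real) \<Rightarrow> (real \<times> real \<Rightarrow> real)
   \<Rightarrow> (real \<times> real \<Rightarrow> real) \<Rightarrow> real \<times> real \<Rightarrow> real" where
  "laplace_beltrami g11 g12 g22 u p =
     (let dt = (\<lambda>q. g11 q * g22 q - (g12 q)\<^sup>2) in
       (pd1 (\<lambda>q. sqrt (dt q) * ((g22 q / dt q) * pd1 u q - (g12 q / dt q) * pd2 u q)) p
      + pd2 (\<lambda>q. sqrt (dt q) * (- (g12 q / dt q) * pd1 u q + (g11 q / dt q) * pd2 u q)) p)
       / sqrt (dt p))"

definition C2_on :: "(real \<times> real) set \<Rightarrow> (real \<times> real \<Rightarrow> real) \<Rightarrow> bool" where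
  "C2_on U u \<longleftrightarrow> (\<exists>(Du :: real \<times> real \<Rightarrow> ((real \<times> real) \<Rightarrow>\<^sub>L real))
       (D2u :: real \<times> real \<Rightarrow> ((real \<times> real) \<Rightarrow>\<^sub>L ((real \<times> real) \<Rightarrow>\<^sub>L real))).
      (\<forall>p\<in>U. (u has_derivative blinfun_apply (Du p)) (at p)) \<and>
      (\<forall>p\<in>U. (Du has_derivative blinfun_apply (D2u p)) (at p)) \<and>
      continuous_on U D2u)"

definition rev_end_harmonic :: "(real \<Rightarrow> real) \<Rightarrow> (real \<Rightarrow> real) \<Rightarrow> (real \<times> real \<Rightarrow> real) \<Rightarrow> bool" where
  "rev_end_harmonic g1 g2 u \<longleftrightarrow>
     (let X = rev_immersion g1 g2 in
       C2_on ({0<..} \<times> UNIV) u \<and>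
       (\<forall>p\<in>{0<..} \<times> UNIV. laplace_beltrami (hyp_g11 X) (hyp_g12 X) (hyp_g22 X) u p = 0))"

text \<open>A bounded harmonic function on E: a function on [0,oo) x S^1 (i.e. 2pi-periodic in theta),
  continuous up to the boundary, bounded, and harmonic in the interior.\<close>
definition bounded_harmonic_on_rev_end ::
  "(real \<Rightarrow> real) \<Rightarrow> (real \<Rightarrow> real) \<Rightarrow> (real \<times> real \<Rightarrow> real) \<Rightarrow> bool" where
  "bounded_harmonic_on_rev_end g1 g2 u \<longleftrightarrow>
     continuous_on ({0..} \<times> UNIV) u \<and>
     (\<forall>s\<ge>0. \<forall>\<theta>. u (s, \<theta> + 2*pi) = u (s, \<theta>)) \<and>
     bounded (u ` ({0..} \<times> UNIV)) \<and>
     rev_end_harmonic g1 g2 u"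

text \<open>Parabolicity: every bounded harmonic function is determined by its boundary values.\<close>
definition parabolic_rev_end :: "(real \<Rightarrow> real) \<Rightarrow> (real \<Rightarrow> real) \<Rightarrow> bool" where
  "parabolic_rev_end g1 g2 \<longleftrightarrow>
     (\<forall>u v. bounded_harmonic_on_rev_end g1 g2 u \<and> bounded_harmonic_on_rev_end g1 g2 v \<and>
        (\<forall>\<theta>. u (0, \<theta>) = v (0, \<theta>)) \<longrightarrow> (\<forall>p\<in>{0..} \<times> UNIV. u p = v p))"

end

theory Submission
  imports Defs
begin
lemma second_deriv_max:
  fixes g g' :: "real \<Rightarrow> real"
  assumes r: "r > 0"
    and dg: "\<And>x. \<bar>x - z\<bar> < r \<Longrightarrow> (g has_real_derivative g' x) (at x)"
    and dg': "(g' has_real_derivative d) (at z)"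
    and mx: "\<And>x. \<bar>x - z\<bar> < r \<Longrightarrow> g x \<le> g z"
  shows "g' z = 0 \<and> d \<le> 0"
proof
  show g0: "g' z = 0"
    by (rule DERIV_local_max[OF dg[of z] r]) (use r mx in \<open>auto simp: abs_minus_commute\<close>)
  show "d \<le> 0"
  proof (rule ccontr)
    assume "\<not> d \<le> 0"
    hence "d > 0" by simp
    from DERIV_pos_inc_right[OF dg' this] obtain e where e: "e > 0"
      "\<And>h. h > 0 \<Longrightarrow> h < e \<Longrightarrow> g' z < g' (z + h)" by blast
    define h where "h = min e r / 2"
    have h: "h > 0" "h < e" "h < r" using e r by (auto simp: h_def)
    have "g z < g (z + h)"
    proof (rule DERIV_pos_imp_increasing_open[of z "z+h" g])
      show "z < z + h" using h by simp
      fix x assume x: "z < x" "x < z + h"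
      have "g' z < g' (z + (x - z))" using e(2)[of "x - z"] x h by simp
      hence "g' x > 0" using g0 by simp
      moreover have "(g has_real_derivative g' x) (at x)" using dg x h by simp
      ultimately show "\<exists>y. (g has_real_derivative y) (at x) \<and> y > 0" by blast
    next
      show "continuous_on {z..z+h} g"
        by (rule DERIV_continuous_on[where D=g'], rule has_field_derivative_at_within, rule dg)
           (use h in auto)
    qed
    moreover have "g (z + h) \<le> g z" using mx[of "z+h"] h by simp
    ultimately show False by simp
  qed
qed

lemma line1:
  fixes F :: "real \<times> real \<Rightarrow> 'a::real_normed_vector"
  assumes "(F has_derivative F') (at p)"
  shows "((\<lambda>t. F (t, snd p)) has_vector_derivative F' (1,0)) (at (fst p))"
proof -
  have l: "linear F'" using assms by (rule has_derivative_linear)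
  have "((\<lambda>t. (t, snd p)) has_derivative (\<lambda>h. (h, 0))) (at (fst p))"
    by (auto intro!: derivative_eq_intros)
  from has_derivative_compose[OF this] assms
  have "((\<lambda>t. F (t, snd p)) has_derivative (\<lambda>h. F' (h, 0))) (at (fst p))" by simp
  moreover have "(\<lambda>h. F' (h, 0)) = (\<lambda>h. h *\<^sub>R F' (1,0))"
  proof
    fix h :: real have "(h, 0::real) = h *\<^sub>R (1, 0)" by simp
    then show "F' (h, 0) = h *\<^sub>R F' (1,0)" using linear.scaleR[OF l] by metis
  qed
  ultimately show ?thesis by (simp add: has_vector_derivative_def)
qed

lemma line2:
  fixes F :: "real \<times> real \<Rightarrow> 'a::real_normed_vector"
  assumes "(F has_derivative F') (at p)"
  shows "((\<lambda>t. F (fst p, t)) has_vector_derivative F' (0,1)) (at (snd p))"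
proof -
  have l: "linear F'" using assms by (rule has_derivative_linear)
  have "((\<lambda>t. (fst p, t)) has_derivative (\<lambda>h. (0, h))) (at (snd p))"
    by (auto intro!: derivative_eq_intros)
  from has_derivative_compose[OF this] assms
  have "((\<lambda>t. F (fst p, t)) has_derivative (\<lambda>h. F' (0, h))) (at (snd p))" by simp
  moreover have "(\<lambda>h. F' (0, h)) = (\<lambda>h. h *\<^sub>R F' (0,1))"
  proof
    fix h :: real have "(0::real, h) = h *\<^sub>R (0, 1)" by simp
    then show "F' (0, h) = h *\<^sub>R F' (0,1)" using linear.scaleR[OF l] by metis
  qed
  ultimately show ?thesis by (simp add: has_vector_derivative_def)
qed

lemma eval_deriv:
  fixes Du :: "real \<times> real \<Rightarrow> ((real \<times> real) \<Rightarrow>\<^sub>L real)"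
  assumes "(Du has_derivative blinfun_apply D) (at p)"
  shows "((\<lambda>q. blinfun_apply (Du q) v) has_derivative (\<lambda>h. blinfun_apply (blinfun_apply D h) v)) (at p)"
  using bounded_linear.has_derivative[OF bounded_bilinear.bounded_linear_left[OF bounded_bilinear_blinfun_apply] assms]
  by simp

definition nrm :: "(real\<Rightarrow>real) \<Rightarrow> (real\<Rightarrow>real) \<Rightarrow> real \<Rightarrow> real" where
  "nrm d1 e1 s = sqrt ((d1 s)\<^sup>2 + (e1 s)\<^sup>2)"

lemma cs_sq: "(cos t)\<^sup>2 * x + (sin t)\<^sup>2 * x = (x::real)"
proof -
  have "(cos t)\<^sup>2 * x + (sin t)\<^sup>2 * x = ((sin t)\<^sup>2 + (cos t)\<^sup>2) * x" by algebra
  then show ?thesis by simp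
qed

locale prof =
  fixes g1 g2 d1 d2 e1 e2 :: "real \<Rightarrow> real"
  assumes g1d: "\<And>x. x \<ge> 0 \<Longrightarrow> (g1 has_real_derivative d1 x) (at x within {0..})"
    and d1d: "\<And>x. x \<ge> 0 \<Longrightarrow> (d1 has_real_derivative d2 x) (at x within {0..})"
    and g2d: "\<And>x. x \<ge> 0 \<Longrightarrow> (g2 has_real_derivative e1 x) (at x within {0..})"
    and e1d: "\<And>x. x \<ge> 0 \<Longrightarrow> (e1 has_real_derivative e2 x) (at x within {0..})"
    and nz: "\<And>s. s \<ge> 0 \<Longrightarrow> (d1 s, e1 s) \<noteq> (0,0)"
    and pos: "\<And>s. s \<ge> 0 \<Longrightarrow> g1 s > 0 \<and> g2 s > 0"
begin

lemma at_int: "x > 0 \<Longrightarrow> at x within {0..} = at (x::real)"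
  by (rule at_within_interior) simp

lemma g1da: "x > 0 \<Longrightarrow> (g1 has_real_derivative d1 x) (at x)"
  using g1d[of x] at_int[of x] by simp
lemma d1da: "x > 0 \<Longrightarrow> (d1 has_real_derivative d2 x) (at x)"
  using d1d[of x] at_int[of x] by simp
lemma g2da: "x > 0 \<Longrightarrow> (g2 has_real_derivative e1 x) (at x)"
  using g2d[of x] at_int[of x] by simp
lemma e1da: "x > 0 \<Longrightarrow> (e1 has_real_derivative e2 x) (at x)"
  using e1d[of x] at_int[of x] by simp

lemma nrm_pos: "s \<ge> 0 \<Longrightarrow> nrm d1 e1 s > 0"
proof -
  assume "s \<ge> 0"
  then have "d1 s \<noteq> 0 \<or> e1 s \<noteq> 0" using nz[of s] by auto
  then have "(d1 s)\<^sup>2 + (e1 s)\<^sup>2 > 0" by (simp add: sum_power2_gt_zero_iff)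
  then show ?thesis unfolding nrm_def by simp
qed

lemma nrm_sq: "(nrm d1 e1 s)\<^sup>2 = (d1 s)\<^sup>2 + (e1 s)\<^sup>2"
  unfolding nrm_def by simp

lemma pd1X: "t > 0 \<Longrightarrow> pd1 (rev_immersion g1 g2) (t, \<theta>) = (d1 t * cos \<theta>, d1 t * sin \<theta>, e1 t)"
proof -
  assume t: "t > 0"
  have a: "((\<lambda>x. g1 x * cos \<theta>) has_vector_derivative d1 t * cos \<theta>) (at t)"
    using DERIV_cmult_right[OF g1da[OF t], of "cos \<theta>"]
    by (simp add: has_real_derivative_iff_has_vector_derivative)
  have b: "((\<lambda>x. g1 x * sin \<theta>) has_vector_derivative d1 t * sin \<theta>) (at t)"
    using DERIV_cmult_right[OF g1da[OF t], of "sin \<theta>"]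
    by (simp add: has_real_derivative_iff_has_vector_derivative)
  have c: "(g2 has_vector_derivative e1 t) (at t)"
    using g2da[OF t] by (simp add: has_real_derivative_iff_has_vector_derivative)
  have "((\<lambda>x. (g1 x * cos \<theta>, g1 x * sin \<theta>, g2 x)) has_vector_derivative (d1 t * cos \<theta>, d1 t * sin \<theta>, e1 t)) (at t)"
    by (rule has_vector_derivative_Pair[OF a has_vector_derivative_Pair[OF b c]])
  then show ?thesis unfolding pd1_def rev_immersion_def by (simp add: vector_derivative_at)
qed

lemma pd2X: "t > 0 \<Longrightarrow> pd2 (rev_immersion g1 g2) (t, \<theta>) = (- g1 t * sin \<theta>, g1 t * cos \<theta>, 0)"
proof -
  have a: "((\<lambda>x. g1 t * cos x) has_vector_derivative - g1 t * sin \<theta>) (at \<theta>)"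
    using DERIV_cmult[OF DERIV_cos, of "g1 t" \<theta>]
    by (simp add: has_real_derivative_iff_has_vector_derivative)
  have b: "((\<lambda>x. g1 t * sin x) has_vector_derivative g1 t * cos \<theta>) (at \<theta>)"
    using DERIV_cmult[OF DERIV_sin, of "g1 t" \<theta>]
    by (simp add: has_real_derivative_iff_has_vector_derivative)
  have c: "((\<lambda>x. g2 t) has_vector_derivative 0) (at \<theta>)"
    by (rule has_vector_derivative_const)
  have "((\<lambda>x. (g1 t * cos x, g1 t * sin x, g2 t)) has_vector_derivative (- g1 t * sin \<theta>, g1 t * cos \<theta>, 0)) (at \<theta>)"
    by (rule has_vector_derivative_Pair[OF a has_vector_derivative_Pair[OF b c]])
  then show ?thesis unfolding pd2_def rev_immersion_def by (simp add: vector_derivative_at)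
qed

lemma g11: "fst q > 0 \<Longrightarrow> hyp_g11 (rev_immersion g1 g2) q = (nrm d1 e1 (fst q))\<^sup>2 / (g2 (fst q))\<^sup>2"
proof -
  assume "fst q > 0"
  then obtain t \<theta> where q: "q = (t, \<theta>)" "t > 0" by (cases q) auto
  have "(d1 t * cos \<theta>)\<^sup>2 + (d1 t * sin \<theta>)\<^sup>2 = (d1 t)\<^sup>2 * ((sin \<theta>)\<^sup>2 + (cos \<theta>)\<^sup>2)"
    by (simp add: power_mult_distrib cs_sq algebra_simps)
  then show ?thesis using q
    by (simp add: hyp_g11_def pd1X nrm_sq rev_immersion_def power2_eq_square[symmetric])
qed

lemma g12: "fst q > 0 \<Longrightarrow> hyp_g12 (rev_immersion g1 g2) q = 0"
proof -
  assume "fst q > 0"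
  then obtain t \<theta> where q: "q = (t, \<theta>)" "t > 0" by (cases q) auto
  then show ?thesis
    by (simp add: hyp_g12_def pd1X pd2X algebra_simps)
qed

lemma g22: "fst q > 0 \<Longrightarrow> hyp_g22 (rev_immersion g1 g2) q = (g1 (fst q))\<^sup>2 / (g2 (fst q))\<^sup>2"
proof -
  assume "fst q > 0"
  then obtain t \<theta> where q: "q = (t, \<theta>)" "t > 0" by (cases q) auto
  have "(g1 t * sin \<theta>)\<^sup>2 + (g1 t * cos \<theta>)\<^sup>2 = (g1 t)\<^sup>2 * ((sin \<theta>)\<^sup>2 + (cos \<theta>)\<^sup>2)"
    by (simp add: power_mult_distrib cs_sq algebra_simps)
  then show ?thesis using q
    by (simp add: hyp_g22_def pd2X rev_immersion_def power2_eq_square[symmetric])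
qed

end

lemma pd1_flux:
  fixes Du :: "real \<times> real \<Rightarrow> ((real \<times> real) \<Rightarrow>\<^sub>L real)"
  assumes phi: "\<And>q. fst q > 0 \<Longrightarrow> \<Phi> q = a (fst q) * Du q (1,0)"
    and A: "(a has_real_derivative A) (at s)" and s: "s > 0"
    and U2: "\<And>q. fst q > 0 \<Longrightarrow> (Du has_derivative blinfun_apply (D2u q)) (at q)"
  shows "pd1 \<Phi> (s,\<theta>) = A * Du (s,\<theta>) (1,0) + a s * D2u (s,\<theta>) (1,0) (1,0)"
proof -
  have "((\<lambda>t. Du (t, \<theta>) (1,0)) has_vector_derivative D2u (s,\<theta>) (1,0) (1,0)) (at s)"
    using line1[OF eval_deriv[OF U2[of "(s,\<theta>)"]], of "(1,0)"] s by simp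
  then have "((\<lambda>t. Du (t, \<theta>) (1,0)) has_real_derivative D2u (s,\<theta>) (1,0) (1,0)) (at s)"
    by (simp add: has_real_derivative_iff_has_vector_derivative)
  from DERIV_mult[OF A this]
  have "((\<lambda>t. a t * Du (t, \<theta>) (1,0)) has_vector_derivative A * Du (s,\<theta>) (1,0) + D2u (s,\<theta>) (1,0) (1,0) * a s) (at s)"
    by (simp add: has_real_derivative_iff_has_vector_derivative)
  then have "((\<lambda>t. \<Phi> (t, \<theta>)) has_vector_derivative A * Du (s,\<theta>) (1,0) + D2u (s,\<theta>) (1,0) (1,0) * a s) (at s)"
    by (rule has_vector_derivative_transform_within_open[where S="{0<..}"]) (use s phi in auto)
  then have "vector_derivative (\<lambda>t. \<Phi> (t, \<theta>)) (at s) = A * Du (s,\<theta>) (1,0) + D2u (s,\<theta>) (1,0) (1,0) * a s"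
    by (rule vector_derivative_at)
  then show ?thesis unfolding pd1_def by (simp add: algebra_simps)
qed

lemma pd2_flux:
  fixes Du :: "real \<times> real \<Rightarrow> ((real \<times> real) \<Rightarrow>\<^sub>L real)"
  assumes phi: "\<And>q. fst q > 0 \<Longrightarrow> \<Phi> q = b (fst q) * Du q (0,1)"
    and s: "s > 0"
    and U2: "\<And>q. fst q > 0 \<Longrightarrow> (Du has_derivative blinfun_apply (D2u q)) (at q)"
  shows "pd2 \<Phi> (s,\<theta>) = b s * D2u (s,\<theta>) (0,1) (0,1)"
proof -
  have "((\<lambda>t. Du (s, t) (0,1)) has_vector_derivative D2u (s,\<theta>) (0,1) (0,1)) (at \<theta>)"
    using line2[OF eval_deriv[OF U2[of "(s,\<theta>)"]], of "(0,1)"] s by simp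
  then have "((\<lambda>t. Du (s, t) (0,1)) has_real_derivative D2u (s,\<theta>) (0,1) (0,1)) (at \<theta>)"
    by (simp add: has_real_derivative_iff_has_vector_derivative)
  from DERIV_cmult[OF this, of "b s"]
  have "((\<lambda>t. \<Phi> (s, t)) has_real_derivative b s * D2u (s,\<theta>) (0,1) (0,1)) (at \<theta>)"
    using phi s by simp
  then show ?thesis unfolding pd2_def
    by (simp add: vector_derivative_at has_real_derivative_iff_has_vector_derivative)
qed

context prof begin

lemma pdu1:
  assumes "(u has_derivative blinfun_apply (Du q)) (at q)"
  shows "pd1 u q = Du q (1,0)"
  unfolding pd1_def by (rule vector_derivative_at[OF line1[OF assms]])

lemma pdu2:
  assumes "(u has_derivative blinfun_apply (Du q)) (at q)"
  shows "pd2 u q = Du q (0,1)"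
  unfolding pd2_def by (rule vector_derivative_at[OF line2[OF assms]])

lemma sqrt_dt:
  assumes "fst q > 0"
  shows "sqrt (hyp_g11 (rev_immersion g1 g2) q * hyp_g22 (rev_immersion g1 g2) q
           - (hyp_g12 (rev_immersion g1 g2) q)\<^sup>2)
         = nrm d1 e1 (fst q) * g1 (fst q) / (g2 (fst q))\<^sup>2"
   and "hyp_g11 (rev_immersion g1 g2) q * hyp_g22 (rev_immersion g1 g2) q
           - (hyp_g12 (rev_immersion g1 g2) q)\<^sup>2
         = (nrm d1 e1 (fst q) * g1 (fst q) / (g2 (fst q))\<^sup>2)\<^sup>2"
proof -
  have p: "nrm d1 e1 (fst q) > 0" "g1 (fst q) > 0" "g2 (fst q) > 0"
    using nrm_pos pos assms by auto
  show e: "hyp_g11 (rev_immersion g1 g2) q * hyp_g22 (rev_immersion g1 g2) q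
           - (hyp_g12 (rev_immersion g1 g2) q)\<^sup>2
         = (nrm d1 e1 (fst q) * g1 (fst q) / (g2 (fst q))\<^sup>2)\<^sup>2"
    using assms by (simp add: g11 g12 g22 power_mult_distrib power_divide power2_eq_square)
  show "sqrt (hyp_g11 (rev_immersion g1 g2) q * hyp_g22 (rev_immersion g1 g2) q
           - (hyp_g12 (rev_immersion g1 g2) q)\<^sup>2)
         = nrm d1 e1 (fst q) * g1 (fst q) / (g2 (fst q))\<^sup>2"
    unfolding e using p by simp
qed

lemma LB:
  fixes Du :: "real \<times> real \<Rightarrow> ((real \<times> real) \<Rightarrow>\<^sub>L real)"
  assumes U: "\<And>q. fst q > 0 \<Longrightarrow> (u has_derivative blinfun_apply (Du q)) (at q)"
    and U2: "\<And>q. fst q > 0 \<Longrightarrow> (Du has_derivative blinfun_apply (D2u q)) (at q)"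
    and s: "s > 0"
    and A: "((\<lambda>t. g1 t / nrm d1 e1 t) has_real_derivative A) (at s)"
  shows "laplace_beltrami (hyp_g11 (rev_immersion g1 g2)) (hyp_g12 (rev_immersion g1 g2))
            (hyp_g22 (rev_immersion g1 g2)) u (s,\<theta>)
       = (A * Du (s,\<theta>) (1,0) + g1 s / nrm d1 e1 s * D2u (s,\<theta>) (1,0) (1,0)
          + nrm d1 e1 s / g1 s * D2u (s,\<theta>) (0,1) (0,1)) / (nrm d1 e1 s * g1 s / (g2 s)\<^sup>2)"
proof -
  define G11 where "G11 = hyp_g11 (rev_immersion g1 g2)"
  define G12 where "G12 = hyp_g12 (rev_immersion g1 g2)"
  define G22 where "G22 = hyp_g22 (rev_immersion g1 g2)"
  have F1: "sqrt (G11 q * G22 q - (G12 q)\<^sup>2) * (G22 q / (G11 q * G22 q - (G12 q)\<^sup>2) * pd1 u q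
             - G12 q / (G11 q * G22 q - (G12 q)\<^sup>2) * pd2 u q)
          = g1 (fst q) / nrm d1 e1 (fst q) * Du q (1,0)" if q: "fst q > 0" for q
  proof -
    have p: "nrm d1 e1 (fst q) > 0" "g1 (fst q) > 0" "g2 (fst q) > 0"
      using nrm_pos pos q by auto
    show ?thesis unfolding G11_def G12_def G22_def
      apply (simp only: sqrt_dt(1)[OF q])
      apply (simp only: sqrt_dt(2)[OF q])
      using p q by (simp add: g12 g22 g11 pdu1[of u Du q, OF U[OF q]] field_simps power2_eq_square)
  qed
  have F2: "sqrt (G11 q * G22 q - (G12 q)\<^sup>2) * (- (G12 q / (G11 q * G22 q - (G12 q)\<^sup>2)) * pd1 u q
             + G11 q / (G11 q * G22 q - (G12 q)\<^sup>2) * pd2 u q)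
          = nrm d1 e1 (fst q) / g1 (fst q) * Du q (0,1)" if q: "fst q > 0" for q
  proof -
    have p: "nrm d1 e1 (fst q) > 0" "g1 (fst q) > 0" "g2 (fst q) > 0"
      using nrm_pos pos q by auto
    show ?thesis unfolding G11_def G12_def G22_def
      apply (simp only: sqrt_dt(1)[OF q])
      apply (simp only: sqrt_dt(2)[OF q])
      using p q by (simp add: g12 g22 g11 pdu2[of u Du q, OF U[OF q]] field_simps power2_eq_square)
  qed
  have S: "sqrt (G11 (s,\<theta>) * G22 (s,\<theta>) - (G12 (s,\<theta>))\<^sup>2) = nrm d1 e1 s * g1 s / (g2 s)\<^sup>2"
    unfolding G11_def G12_def G22_def using sqrt_dt(1)[of "(s,\<theta>)"] s by simp
  show ?thesis
    unfolding laplace_beltrami_def Let_def G11_def[symmetric] G12_def[symmetric] G22_def[symmetric] S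
    apply (subst pd1_flux[OF _ A s U2])
     apply (erule F1)
    apply simp
    apply (subst pd2_flux[OF _ s U2])
     apply (erule F2)
    apply simp
    apply (simp add: algebra_simps)
    done
qed

end

definition kk :: "real \<Rightarrow> real" where "kk s = 1 + 1 / (1 + s)"

lemma kk_ge1: "s \<ge> 0 \<Longrightarrow> kk s \<ge> 1" unfolding kk_def by simp

lemma kk_deriv: "s \<ge> 0 \<Longrightarrow> (kk has_real_derivative - 1 / (1 + s)\<^sup>2) (at s)"
  unfolding kk_def
  by (auto intro!: derivative_eq_intros simp: power2_eq_square)

lemma not_bot0: "(s::real) \<ge> 0 \<Longrightarrow> at s within {0..} \<noteq> bot"
proof -
  assume s: "s \<ge> 0"
  have "s islimpt {0..s+1}" using s by simp
  then have "s islimpt {0..}" by (rule islimpt_subset) auto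
  then show ?thesis using trivial_limit_within by blast
qed

context prof begin

definition hh where "hh s = nrm d1 e1 s * kk s / g1 s"
definition FF where "FF s = integral {0..s} hh"

lemma profile_vel_eq: "s \<ge> 0 \<Longrightarrow> profile_vel g1 g2 s = (d1 s, e1 s)"
proof -
  assume s: "s \<ge> 0"
  have "(profile g1 g2 has_vector_derivative (d1 s, e1 s)) (at s within {0..})"
    unfolding profile_def
    by (rule has_vector_derivative_Pair)
       (use g1d[OF s] g2d[OF s] in \<open>simp_all add: has_real_derivative_iff_has_vector_derivative\<close>)
  then show ?thesis unfolding profile_vel_def by (rule vector_derivative_within[OF not_bot0[OF s]])
qed

lemma cont_d1: "continuous_on {0..} d1"
  by (rule DERIV_continuous_on[where D=d2]) (use d1d in auto)
lemma cont_e1: "continuous_on {0..} e1"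
  by (rule DERIV_continuous_on[where D=e2]) (use e1d in auto)
lemma cont_g1: "continuous_on {0..} g1"
  by (rule DERIV_continuous_on[where D=d1]) (use g1d in auto)
lemma cont_g2: "continuous_on {0..} g2"
  by (rule DERIV_continuous_on[where D=e1]) (use g2d in auto)

lemma cont_nrm: "continuous_on {0..} (nrm d1 e1)"
  unfolding nrm_def by (intro continuous_intros cont_d1 cont_e1)

lemma cont_kk: "continuous_on {0..} kk"
  unfolding kk_def by (intro continuous_intros) auto

lemma cont_hh: "continuous_on {0..} hh"
  unfolding hh_def
  by (intro continuous_intros cont_nrm cont_kk cont_g1) (use pos in force)

lemma hh_pos: "s \<ge> 0 \<Longrightarrow> hh s > 0"
  unfolding hh_def using nrm_pos pos kk_ge1[of s] by (simp add: less_le_trans)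

lemma FF_deriv: "s > 0 \<Longrightarrow> (FF has_real_derivative hh s) (at s)"
proof -
  assume s: "s > 0"
  have c: "continuous_on {0..s+1} hh" by (rule continuous_on_subset[OF cont_hh]) auto
  have "(FF has_vector_derivative hh s) (at s within {0..s+1})"
    unfolding FF_def by (rule integral_has_vector_derivative[OF c]) (use s in auto)
  moreover have "at s within {0..s+1} = at s"
    by (rule at_within_interior) (use s in auto)
  ultimately show ?thesis by (simp add: has_real_derivative_iff_has_vector_derivative)
qed

lemma FF_cont: "continuous_on {0..T} FF"
proof -
  have c: "continuous_on {0..T} hh" by (rule continuous_on_subset[OF cont_hh]) auto
  show ?thesis unfolding FF_def
    by (rule indefinite_integral_continuous_1[OF integrable_continuous_interval[OF c]])
qed

lemma FF0: "FF 0 = 0" unfolding FF_def by simp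

lemma FF_nonneg: "s \<ge> 0 \<Longrightarrow> FF s \<ge> 0"
  unfolding FF_def
  by (rule integral_nonneg[OF integrable_continuous_interval])
     (auto intro: continuous_on_subset[OF cont_hh] less_imp_le[OF hh_pos])

lemma nrm_deriv: "s > 0 \<Longrightarrow> \<exists>N. (nrm d1 e1 has_real_derivative N) (at s)"
proof -
  assume s: "s > 0"
  have q: "((\<lambda>t. d1 t * d1 t + e1 t * e1 t) has_real_derivative
        d2 s * d1 s + d1 s * d2 s + (e2 s * e1 s + e1 s * e2 s)) (at s)"
    using DERIV_add[OF DERIV_mult[OF d1da[OF s] d1da[OF s]] DERIV_mult[OF e1da[OF s] e1da[OF s]]] by simp
  have p: "d1 s * d1 s + e1 s * e1 s > 0"
    using nrm_pos[of s] s unfolding nrm_def by (simp add: power2_eq_square)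
  have "((\<lambda>t. sqrt (d1 t * d1 t + e1 t * e1 t)) has_real_derivative
        inverse (sqrt (d1 s * d1 s + e1 s * e1 s)) / 2 * (d2 s * d1 s + d1 s * d2 s + (e2 s * e1 s + e1 s * e2 s))) (at s)"
    by (rule DERIV_chain2[OF DERIV_real_sqrt[OF p] q])
  moreover have "(\<lambda>t. sqrt (d1 t * d1 t + e1 t * e1 t)) = nrm d1 e1"
    by (auto simp: nrm_def power2_eq_square)
  ultimately show ?thesis by auto
qed

lemma a_deriv: "s > 0 \<Longrightarrow> \<exists>A. ((\<lambda>t. g1 t / nrm d1 e1 t) has_real_derivative A) (at s)"
proof -
  assume s: "s > 0"
  obtain N where N: "(nrm d1 e1 has_real_derivative N) (at s)" using nrm_deriv[OF s] by blast
  show ?thesis using DERIV_divide[OF g1da[OF s] N] nrm_pos[of s] s by auto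
qed

lemma hh_deriv: "s > 0 \<Longrightarrow> \<exists>H. (hh has_real_derivative H) (at s)"
proof -
  assume s: "s > 0"
  obtain N where N: "(nrm d1 e1 has_real_derivative N) (at s)" using nrm_deriv[OF s] by blast
  have "g1 s \<noteq> 0" using s pos[of s] by auto
  from DERIV_divide[OF DERIV_mult[OF N kk_deriv] g1da[OF s] this] s
  show ?thesis unfolding hh_def[abs_def] by auto
qed

lemma key_ineq:
  assumes s: "s > 0" and A: "((\<lambda>t. g1 t / nrm d1 e1 t) has_real_derivative A) (at s)"
    and H: "(hh has_real_derivative H) (at s)"
  shows "A * hh s + g1 s / nrm d1 e1 s * H < 0"
proof -
  have "((\<lambda>t. g1 t / nrm d1 e1 t * hh t) has_real_derivative A * hh s + g1 s / nrm d1 e1 s * H) (at s)"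
    using DERIV_mult[OF A H] by (simp add: algebra_simps)
  then have "(kk has_real_derivative A * hh s + g1 s / nrm d1 e1 s * H) (at s)"
  proof (rule has_field_derivative_transform_within_open[where S="{0<..}"])
    fix x :: real assume "x \<in> {0<..}"
    then have "nrm d1 e1 x > 0" "g1 x > 0" using nrm_pos pos by auto
    then show "g1 x / nrm d1 e1 x * hh x = kk x" unfolding hh_def by (simp add: field_simps)
  qed (use s in auto)
  moreover have "(kk has_real_derivative - 1 / (1 + s)\<^sup>2) (at s)" using kk_deriv s by simp
  ultimately have "A * hh s + g1 s / nrm d1 e1 s * H = - 1 / (1 + s)\<^sup>2" by (rule DERIV_unique)
  also have "\<dots> < 0" using s by simp
  finally show ?thesis .
qed

end

lemma periodic_int:
  fixes f :: "real \<times> real \<Rightarrow> real"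
  assumes per: "\<And>\<theta>. f (s, \<theta> + 2*pi) = f (s, \<theta>)"
  shows "f (s, \<theta> + 2*pi * of_int n) = f (s, \<theta>)"
proof (induct n rule: int_induct[where k=0])
  case base then show ?case by simp
next
  case (step1 i)
  have "f (s, \<theta> + 2*pi * of_int (i+1)) = f (s, (\<theta> + 2*pi * of_int i) + 2*pi)"
    by (simp add: algebra_simps)
  also have "\<dots> = f (s, \<theta>)" using per step1 by simp
  finally show ?case .
next
  case (step2 i)
  have "f (s, \<theta> + 2*pi * of_int i) = f (s, (\<theta> + 2*pi * of_int (i - 1)) + 2*pi)"
    by (simp add: algebra_simps)
  also have "\<dots> = f (s, \<theta> + 2*pi * of_int (i - 1))" using per by simp
  finally show ?case using step2 by simp
qed

definition red :: "real \<Rightarrow> real" where "red \<theta> = \<theta> - 2*pi * of_int \<lfloor>\<theta> / (2*pi)\<rfloor>"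

lemma red_range: "0 \<le> red \<theta> \<and> red \<theta> \<le> 2*pi"
proof -
  have p: "2*pi > 0" by simp
  have "of_int \<lfloor>\<theta> / (2*pi)\<rfloor> \<le> \<theta> / (2*pi)" by (rule of_int_floor_le)
  then have "2*pi * of_int \<lfloor>\<theta> / (2*pi)\<rfloor> \<le> 2*pi * (\<theta> / (2*pi))"
    using p by (intro mult_left_mono) auto
  then have a: "2*pi * of_int \<lfloor>\<theta> / (2*pi)\<rfloor> \<le> \<theta>" using p by simp
  have "\<theta> / (2*pi) < of_int \<lfloor>\<theta> / (2*pi)\<rfloor> + 1" by (rule real_of_int_floor_add_one_gt)
  then have "2*pi * (\<theta> / (2*pi)) < 2*pi * (of_int \<lfloor>\<theta> / (2*pi)\<rfloor> + 1)"
    using p by (intro mult_strict_left_mono) auto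
  then have b: "\<theta> < 2*pi * of_int \<lfloor>\<theta> / (2*pi)\<rfloor> + 2*pi" using p by (simp add: algebra_simps)
  show ?thesis using a b unfolding red_def by simp
qed

lemma red_eq:
  fixes f :: "real \<times> real \<Rightarrow> real"
  assumes per: "\<And>\<theta>. f (s, \<theta> + 2*pi) = f (s, \<theta>)"
  shows "f (s, \<theta>) = f (s, red \<theta>)"
  using periodic_int[of f s "red \<theta>" "\<lfloor>\<theta> / (2*pi)\<rfloor>", OF per] unfolding red_def by simp

locale prof2 = prof +
  fixes c :: real
  assumes cpos: "c > 0"
    and cone: "\<And>s. s \<ge> 0 \<Longrightarrow> c * g1 s \<le> g2 s"
    and complete: "filterlim (hyp_length_upto g1 g2) at_top at_top"
begin

lemma FF_ge: "s \<ge> 0 \<Longrightarrow> c * hyp_length_upto g1 g2 s \<le> FF s"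
proof -
  assume s: "s \<ge> 0"
  have eq: "hyp_length_upto g1 g2 s = integral {0..s} (\<lambda>r. nrm d1 e1 r / g2 r)"
    unfolding hyp_length_upto_def
    by (rule integral_cong) (auto simp: profile_vel_eq norm_Pair nrm_def)
  have cg: "continuous_on {0..s} (\<lambda>r. nrm d1 e1 r / g2 r)"
    by (intro continuous_intros continuous_on_subset[OF cont_nrm] continuous_on_subset[OF cont_g2])
       (use pos in force)+
  have i1: "(\<lambda>r. c * (nrm d1 e1 r / g2 r)) integrable_on {0..s}"
    by (intro integrable_continuous_interval continuous_intros cg)
  have i2: "hh integrable_on {0..s}"
    by (intro integrable_continuous_interval continuous_on_subset[OF cont_hh]) auto
  have "c * hyp_length_upto g1 g2 s = integral {0..s} (\<lambda>r. c * (nrm d1 e1 r / g2 r))"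
    unfolding eq by (rule integral_mult[OF integrable_continuous_interval[OF cg]])
  also have "\<dots> \<le> integral {0..s} hh"
  proof (rule integral_le[OF i1 i2])
    fix r assume "r \<in> {0..s}"
    then have r: "r \<ge> 0" by simp
    have n: "nrm d1 e1 r > 0" "g1 r > 0" "g2 r > 0" using nrm_pos pos r by auto
    have "c * (nrm d1 e1 r / g2 r) \<le> nrm d1 e1 r / g1 r"
    proof -
      have "nrm d1 e1 r * (c * g1 r) \<le> nrm d1 e1 r * g2 r"
        using cone[OF r] n by (intro mult_left_mono) auto
      then show ?thesis using n by (simp add: field_simps)
    qed
    also have "\<dots> \<le> nrm d1 e1 r * kk r / g1 r"
      using n kk_ge1[OF r] by (simp add: divide_right_mono)
    finally show "c * (nrm d1 e1 r / g2 r) \<le> hh r" unfolding hh_def .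
  qed
  finally show ?thesis unfolding FF_def .
qed

lemma FF_top: "filterlim FF at_top at_top"
proof (rule filterlim_at_top_mono)
  show "filterlim (\<lambda>s. c * hyp_length_upto g1 g2 s) at_top at_top"
    by (rule filterlim_tendsto_pos_mult_at_top[OF tendsto_const cpos complete])
  show "\<forall>\<^sub>F x in at_top. c * hyp_length_upto g1 g2 x \<le> FF x"
    using eventually_ge_at_top[of 0] by eventually_elim (rule FF_ge)
qed

end

lemma harm_data:
  assumes "bounded_harmonic_on_rev_end g1 g2 u"
  obtains Du :: "real \<times> real \<Rightarrow> ((real \<times> real) \<Rightarrow>\<^sub>L real)" and D2u
  where "\<And>q. fst q > 0 \<Longrightarrow> (u has_derivative blinfun_apply (Du q)) (at q)"
    and "\<And>q. fst q > 0 \<Longrightarrow> (Du has_derivative blinfun_apply (D2u q)) (at q)"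
    and "\<And>q. fst q > 0 \<Longrightarrow> laplace_beltrami (hyp_g11 (rev_immersion g1 g2))
          (hyp_g12 (rev_immersion g1 g2)) (hyp_g22 (rev_immersion g1 g2)) u q = 0"
proof -
  from assms have h: "C2_on ({0<..} \<times> UNIV) u"
    "\<And>q. q \<in> {0<..} \<times> UNIV \<Longrightarrow> laplace_beltrami (hyp_g11 (rev_immersion g1 g2))
          (hyp_g12 (rev_immersion g1 g2)) (hyp_g22 (rev_immersion g1 g2)) u q = 0"
    unfolding bounded_harmonic_on_rev_end_def rev_end_harmonic_def Let_def by auto
  from h(1) obtain Du D2u where
    "\<forall>p\<in>{0<..} \<times> UNIV. (u has_derivative blinfun_apply (Du p)) (at p)"
    "\<forall>p\<in>{0<..} \<times> UNIV. (Du has_derivative blinfun_apply (D2u p)) (at p)"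
    unfolding C2_on_def by blast
  then show ?thesis
  proof (intro that)
    fix q :: "real \<times> real" assume "fst q > 0"
    then have q: "q \<in> {0<..} \<times> UNIV" by (simp add: mem_Times_iff)
    show "(u has_derivative blinfun_apply (Du q)) (at q)" using q \<open>\<forall>p\<in>{0<..} \<times> UNIV. (u has_derivative blinfun_apply (Du p)) (at p)\<close> by blast
  next
    fix q :: "real \<times> real" assume "fst q > 0"
    then have q: "q \<in> {0<..} \<times> UNIV" by (simp add: mem_Times_iff)
    show "(Du has_derivative blinfun_apply (D2u q)) (at q)" using q \<open>\<forall>p\<in>{0<..} \<times> UNIV. (Du has_derivative blinfun_apply (D2u p)) (at p)\<close> by blast
  next
    fix q :: "real \<times> real" assume "fst q > 0"
    then have q: "q \<in> {0<..} \<times> UNIV" by (simp add: mem_Times_iff)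
    show "laplace_beltrami (hyp_g11 (rev_immersion g1 g2))
          (hyp_g12 (rev_immersion g1 g2)) (hyp_g22 (rev_immersion g1 g2)) u q = 0" using h(2)[OF q] .
  qed
qed

context prof2 begin

lemma le_main:
  assumes hu: "bounded_harmonic_on_rev_end g1 g2 u"
    and hv: "bounded_harmonic_on_rev_end g1 g2 v"
    and bd: "\<And>\<theta>. u (0, \<theta>) = v (0, \<theta>)"
    and p: "fst p \<ge> 0"
  shows "u p \<le> v p"
proof (rule ccontr)
  assume "\<not> u p \<le> v p"
  define \<delta> where "\<delta> = u p - v p"
  have \<delta>: "\<delta> > 0" using \<open>\<not> u p \<le> v p\<close> unfolding \<delta>_def by simp
  have cu: "continuous_on ({0..} \<times> UNIV) u" and peru: "\<And>s \<theta>. s \<ge> 0 \<Longrightarrow> u (s, \<theta> + 2*pi) = u (s, \<theta>)"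
    and bu: "bounded (u ` ({0..} \<times> UNIV))"
    using hu unfolding bounded_harmonic_on_rev_end_def by auto
  have cv: "continuous_on ({0..} \<times> UNIV) v" and perv: "\<And>s \<theta>. s \<ge> 0 \<Longrightarrow> v (s, \<theta> + 2*pi) = v (s, \<theta>)"
    and bv: "bounded (v ` ({0..} \<times> UNIV))"
    using hv unfolding bounded_harmonic_on_rev_end_def by auto
  obtain Bu where Bu: "\<And>q. fst q \<ge> 0 \<Longrightarrow> \<bar>u q\<bar> \<le> Bu"
    using bu unfolding bounded_iff by (metis mem_Times_iff UNIV_I atLeast_iff image_eqI real_norm_def)
  obtain Bv where Bv: "\<And>q. fst q \<ge> 0 \<Longrightarrow> \<bar>v q\<bar> \<le> Bv"
    using bv unfolding bounded_iff by (metis mem_Times_iff UNIV_I atLeast_iff image_eqI real_norm_def)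
  define M where "M = Bu + Bv"
  have M: "\<And>q. fst q \<ge> 0 \<Longrightarrow> u q - v q \<le> M"
    using Bu Bv unfolding M_def by (smt (verit))
  have M0: "M \<ge> 0" using M[of p] p \<delta> unfolding \<delta>_def by simp
  define \<epsilon> where "\<epsilon> = \<delta> / (2 * (FF (fst p) + 1))"
  have F0: "FF (fst p) \<ge> 0" using FF_nonneg p by simp
  have \<epsilon>: "\<epsilon> > 0" unfolding \<epsilon>_def using \<delta> F0 by simp
  define \<psi> where "\<psi> q = u q - v q - \<epsilon> * FF (fst q)" for q
  have "\<epsilon> * FF (fst p) \<le> \<delta> / 2"
  proof -
    have "\<epsilon> * FF (fst p) = \<delta> / 2 * (FF (fst p) / (FF (fst p) + 1))"
      unfolding \<epsilon>_def by (simp add: field_simps)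
    also have "\<dots> \<le> \<delta> / 2 * 1"
      using F0 \<delta> by (intro mult_left_mono) auto
    finally show ?thesis by simp
  qed
  then have psip: "\<psi> p > 0" unfolding \<psi>_def \<delta>_def using \<delta> unfolding \<delta>_def by simp
  from FF_top have "\<forall>\<^sub>F s in at_top. FF s \<ge> M / \<epsilon> + 1"
    by (simp add: filterlim_at_top)
  then obtain T0 where T0: "\<And>s. s \<ge> T0 \<Longrightarrow> FF s \<ge> M / \<epsilon> + 1"
    by (auto simp: eventually_at_top_linorder)
  define T where "T = max T0 (fst p + 1)"
  have far: "\<psi> q < 0" if q: "fst q \<ge> T" for q
  proof -
    have "FF (fst q) \<ge> M / \<epsilon> + 1" using T0 q unfolding T_def by simp
    then have "\<epsilon> * FF (fst q) \<ge> \<epsilon> * (M / \<epsilon> + 1)" using \<epsilon> by (intro mult_left_mono) auto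
    also have "\<epsilon> * (M / \<epsilon> + 1) = M + \<epsilon>" using \<epsilon> by (simp add: field_simps)
    finally show ?thesis using M[of q] q p \<epsilon> unfolding \<psi>_def T_def by simp
  qed
  define K where "K = {0..T} \<times> {0..2*pi}"
  have Ksub: "K \<subseteq> {0..} \<times> UNIV" unfolding K_def by auto
  have contK: "continuous_on K \<psi>"
  proof -
    have "continuous_on K (\<lambda>q. FF (fst q))"
      by (rule continuous_on_compose2[OF FF_cont[of T] continuous_on_fst]) (auto simp: K_def)
    then show ?thesis unfolding \<psi>_def
      by (intro continuous_intros continuous_on_subset[OF cu Ksub] continuous_on_subset[OF cv Ksub])
  qed
  have "compact K" unfolding K_def by (intro compact_Times compact_Icc)
  moreover have "K \<noteq> {}" unfolding K_def using p T_def by auto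
  ultimately obtain p0 where p0K: "p0 \<in> K" and p0max: "\<And>y. y \<in> K \<Longrightarrow> \<psi> y \<le> \<psi> p0"
    using continuous_attains_sup[OF _ _ contK] by blast
  have psired: "\<psi> (s, \<theta>) = \<psi> (s, red \<theta>)" if "s \<ge> 0" for s \<theta>
    unfolding \<psi>_def using red_eq[of u s, OF peru[OF that]] red_eq[of v s, OF perv[OF that]] by simp
  have glob: "\<psi> q \<le> \<psi> p0" if q: "fst q \<ge> 0" for q
  proof (cases "fst q \<ge> T")
    case True
    then have "\<psi> q < 0" by (rule far)
    moreover have "\<psi> p0 \<ge> \<psi> (fst p, red (snd p))"
      by (rule p0max) (use p red_range T_def in \<open>auto simp: K_def\<close>)
    moreover have "\<psi> (fst p, red (snd p)) = \<psi> p" using psired[of "fst p" "snd p"] p by simp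
    ultimately show ?thesis using psip by simp
  next
    case False
    have "\<psi> q = \<psi> (fst q, red (snd q))" using psired[of "fst q" "snd q"] q by simp
    also have "\<dots> \<le> \<psi> p0" by (rule p0max) (use q False red_range in \<open>auto simp: K_def\<close>)
    finally show ?thesis .
  qed
  obtain s0 \<theta>0 where p0: "p0 = (s0, \<theta>0)" by (cases p0)
  have pp0: "\<psi> p0 > 0" using glob[OF p] psip by simp
  have s0T: "s0 < T" using far[of p0] pp0 p0 by force
  have s0ne: "s0 \<noteq> 0"
  proof
    assume "s0 = 0"
    then have "\<psi> p0 = 0" unfolding \<psi>_def p0 using bd FF0 by simp
    then show False using pp0 by simp
  qed
  have s0: "s0 > 0" using p0K s0ne unfolding K_def p0 by auto
  obtain Du :: "real \<times> real \<Rightarrow> ((real \<times> real) \<Rightarrow>\<^sub>L real)" and D2u where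
    U1: "\<And>q. fst q > 0 \<Longrightarrow> (u has_derivative blinfun_apply (Du q)) (at q)"
    and U2: "\<And>q. fst q > 0 \<Longrightarrow> (Du has_derivative blinfun_apply (D2u q)) (at q)"
    and UL: "\<And>q. fst q > 0 \<Longrightarrow> laplace_beltrami (hyp_g11 (rev_immersion g1 g2))
          (hyp_g12 (rev_immersion g1 g2)) (hyp_g22 (rev_immersion g1 g2)) u q = 0"
    using harm_data[OF hu] by blast
  obtain Dv :: "real \<times> real \<Rightarrow> ((real \<times> real) \<Rightarrow>\<^sub>L real)" and D2v where
    V1: "\<And>q. fst q > 0 \<Longrightarrow> (v has_derivative blinfun_apply (Dv q)) (at q)"
    and V2: "\<And>q. fst q > 0 \<Longrightarrow> (Dv has_derivative blinfun_apply (D2v q)) (at q)"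
    and VL: "\<And>q. fst q > 0 \<Longrightarrow> laplace_beltrami (hyp_g11 (rev_immersion g1 g2))
          (hyp_g12 (rev_immersion g1 g2)) (hyp_g22 (rev_immersion g1 g2)) v q = 0"
    using harm_data[OF hv] by blast
  obtain A where A: "((\<lambda>t. g1 t / nrm d1 e1 t) has_real_derivative A) (at s0)"
    using a_deriv[OF s0] by blast
  obtain H where H: "(hh has_real_derivative H) (at s0)" using hh_deriv[OF s0] by blast
  define a where "a = g1 s0 / nrm d1 e1 s0"
  define b where "b = nrm d1 e1 s0 / g1 s0"
  define sq where "sq = nrm d1 e1 s0 * g1 s0 / (g2 s0)\<^sup>2"
  have pos0: "nrm d1 e1 s0 > 0" "g1 s0 > 0" "g2 s0 > 0" using nrm_pos pos s0 by auto
  have a: "a > 0" and b: "b > 0" and sq: "sq > 0" unfolding a_def b_def sq_def using pos0 by auto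
  have Lu: "laplace_beltrami (hyp_g11 (rev_immersion g1 g2))
          (hyp_g12 (rev_immersion g1 g2)) (hyp_g22 (rev_immersion g1 g2)) u (s0,\<theta>0) =
     (A * Du (s0,\<theta>0) (1,0) + a * D2u (s0,\<theta>0) (1,0) (1,0) + b * D2u (s0,\<theta>0) (0,1) (0,1)) / sq"
    unfolding a_def b_def sq_def by (rule LB[OF U1 U2 s0 A])
  have "(A * Du (s0,\<theta>0) (1,0) + a * D2u (s0,\<theta>0) (1,0) (1,0) + b * D2u (s0,\<theta>0) (0,1) (0,1)) / sq = 0"
    using UL[of "(s0,\<theta>0)"] Lu s0 by simp
  then have Eu: "A * Du (s0,\<theta>0) (1,0) + a * D2u (s0,\<theta>0) (1,0) (1,0) + b * D2u (s0,\<theta>0) (0,1) (0,1) = 0"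
    using sq by simp
  have Lv: "laplace_beltrami (hyp_g11 (rev_immersion g1 g2))
          (hyp_g12 (rev_immersion g1 g2)) (hyp_g22 (rev_immersion g1 g2)) v (s0,\<theta>0) =
     (A * Dv (s0,\<theta>0) (1,0) + a * D2v (s0,\<theta>0) (1,0) (1,0) + b * D2v (s0,\<theta>0) (0,1) (0,1)) / sq"
    unfolding a_def b_def sq_def by (rule LB[OF V1 V2 s0 A])
  have "(A * Dv (s0,\<theta>0) (1,0) + a * D2v (s0,\<theta>0) (1,0) (1,0) + b * D2v (s0,\<theta>0) (0,1) (0,1)) / sq = 0"
    using VL[of "(s0,\<theta>0)"] Lv s0 by simp
  then have Ev: "A * Dv (s0,\<theta>0) (1,0) + a * D2v (s0,\<theta>0) (1,0) (1,0) + b * D2v (s0,\<theta>0) (0,1) (0,1) = 0"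
    using sq by simp
  have sdir: "Du (s0,\<theta>0) (1,0) - Dv (s0,\<theta>0) (1,0) - \<epsilon> * hh s0 = 0 \<and>
      D2u (s0,\<theta>0) (1,0) (1,0) - D2v (s0,\<theta>0) (1,0) (1,0) - \<epsilon> * H \<le> 0"
  proof (rule second_deriv_max[where g="\<lambda>t. \<psi> (t, \<theta>0)" and r=s0 and z=s0
        and g'="\<lambda>t. Du (t,\<theta>0) (1,0) - Dv (t,\<theta>0) (1,0) - \<epsilon> * hh t"])
    show "s0 > 0" by (rule s0)
  next
    fix x assume x: "\<bar>x - s0\<bar> < s0"
    then have x0: "x > 0" by simp
    have "((\<lambda>t. u (t, \<theta>0)) has_real_derivative Du (x,\<theta>0) (1,0)) (at x)"
      using line1[OF U1[of "(x,\<theta>0)"]] x0 by (simp add: has_real_derivative_iff_has_vector_derivative)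
    moreover have "((\<lambda>t. v (t, \<theta>0)) has_real_derivative Dv (x,\<theta>0) (1,0)) (at x)"
      using line1[OF V1[of "(x,\<theta>0)"]] x0 by (simp add: has_real_derivative_iff_has_vector_derivative)
    ultimately show "((\<lambda>t. \<psi> (t, \<theta>0)) has_real_derivative
        Du (x,\<theta>0) (1,0) - Dv (x,\<theta>0) (1,0) - \<epsilon> * hh x) (at x)"
      unfolding \<psi>_def using DERIV_cmult[OF FF_deriv[OF x0], of \<epsilon>] by (auto intro!: DERIV_diff)
  next
    have "((\<lambda>t. Du (t, \<theta>0) (1,0)) has_real_derivative D2u (s0,\<theta>0) (1,0) (1,0)) (at s0)"
      using line1[OF eval_deriv[OF U2[of "(s0,\<theta>0)"]], of "(1,0)"] s0
      by (simp add: has_real_derivative_iff_has_vector_derivative)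
    moreover have "((\<lambda>t. Dv (t, \<theta>0) (1,0)) has_real_derivative D2v (s0,\<theta>0) (1,0) (1,0)) (at s0)"
      using line1[OF eval_deriv[OF V2[of "(s0,\<theta>0)"]], of "(1,0)"] s0
      by (simp add: has_real_derivative_iff_has_vector_derivative)
    ultimately show "((\<lambda>t. Du (t,\<theta>0) (1,0) - Dv (t,\<theta>0) (1,0) - \<epsilon> * hh t) has_real_derivative
        D2u (s0,\<theta>0) (1,0) (1,0) - D2v (s0,\<theta>0) (1,0) (1,0) - \<epsilon> * H) (at s0)"
      using DERIV_cmult[OF H, of \<epsilon>] by (auto intro!: DERIV_diff)
  next
    fix x assume x: "\<bar>x - s0\<bar> < s0"
    then show "\<psi> (x, \<theta>0) \<le> \<psi> (s0, \<theta>0)" using glob[of "(x,\<theta>0)"] p0 by simp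
  qed
  have tdir: "Du (s0,\<theta>0) (0,1) - Dv (s0,\<theta>0) (0,1) = 0 \<and>
      D2u (s0,\<theta>0) (0,1) (0,1) - D2v (s0,\<theta>0) (0,1) (0,1) \<le> 0"
  proof (rule second_deriv_max[where g="\<lambda>t. \<psi> (s0, t)" and r=1 and z=\<theta>0
        and g'="\<lambda>t. Du (s0,t) (0,1) - Dv (s0,t) (0,1)"])
    show "(1::real) > 0" by simp
  next
    fix x assume x: "\<bar>x - \<theta>0\<bar> < 1"
    have "((\<lambda>t. u (s0, t)) has_real_derivative Du (s0,x) (0,1)) (at x)"
      using line2[OF U1[of "(s0,x)"]] s0 by (simp add: has_real_derivative_iff_has_vector_derivative)
    moreover have "((\<lambda>t. v (s0, t)) has_real_derivative Dv (s0,x) (0,1)) (at x)"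
      using line2[OF V1[of "(s0,x)"]] s0 by (simp add: has_real_derivative_iff_has_vector_derivative)
    ultimately show "((\<lambda>t. \<psi> (s0, t)) has_real_derivative Du (s0,x) (0,1) - Dv (s0,x) (0,1)) (at x)"
      unfolding \<psi>_def by (auto intro!: derivative_eq_intros)
  next
    have "((\<lambda>t. Du (s0, t) (0,1)) has_real_derivative D2u (s0,\<theta>0) (0,1) (0,1)) (at \<theta>0)"
      using line2[OF eval_deriv[OF U2[of "(s0,\<theta>0)"]], of "(0,1)"] s0
      by (simp add: has_real_derivative_iff_has_vector_derivative)
    moreover have "((\<lambda>t. Dv (s0, t) (0,1)) has_real_derivative D2v (s0,\<theta>0) (0,1) (0,1)) (at \<theta>0)"
      using line2[OF eval_deriv[OF V2[of "(s0,\<theta>0)"]], of "(0,1)"] s0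
      by (simp add: has_real_derivative_iff_has_vector_derivative)
    ultimately show "((\<lambda>t. Du (s0,t) (0,1) - Dv (s0,t) (0,1)) has_real_derivative
        D2u (s0,\<theta>0) (0,1) (0,1) - D2v (s0,\<theta>0) (0,1) (0,1)) (at \<theta>0)"
      by (rule DERIV_diff)
  next
    fix x assume x: "\<bar>x - \<theta>0\<bar> < 1"
    show "\<psi> (s0, x) \<le> \<psi> (s0, \<theta>0)" using glob[of "(s0,x)"] p0 s0 by simp
  qed
  have key: "A * hh s0 + a * H < 0" using key_ineq[OF s0 A H] unfolding a_def .
  define X1 where "X1 = Du (s0,\<theta>0) (1,0) - Dv (s0,\<theta>0) (1,0)"
  define X2 where "X2 = D2u (s0,\<theta>0) (1,0) (1,0) - D2v (s0,\<theta>0) (1,0) (1,0)"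
  define X3 where "X3 = D2u (s0,\<theta>0) (0,1) (0,1) - D2v (s0,\<theta>0) (0,1) (0,1)"
  have E: "A * X1 + a * X2 + b * X3 = 0" using Eu Ev unfolding X1_def X2_def X3_def
    by (simp add: algebra_simps)
  have x1: "X1 = \<epsilon> * hh s0" using sdir unfolding X1_def by simp
  have x2: "a * X2 \<le> a * (\<epsilon> * H)" using sdir a unfolding X2_def by (intro mult_left_mono) auto
  have x3: "b * X3 \<le> 0" using tdir b unfolding X3_def by (simp add: mult_nonneg_nonpos)
  have "0 \<le> A * (\<epsilon> * hh s0) + a * (\<epsilon> * H)" using E x2 x3 unfolding x1 by linarith
  also have "\<dots> = \<epsilon> * (A * hh s0 + a * H)" by (simp add: algebra_simps)
  also have "\<dots> < 0" using \<epsilon> key by (simp add: mult_pos_neg)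
  finally show False by simp
qed

end

lemma smooth_get:
  assumes "smooth_on {0..} g"
  obtains d d2 where "\<And>x. x \<ge> 0 \<Longrightarrow> (g has_real_derivative d x) (at x within {0..})"
    and "\<And>x. x \<ge> 0 \<Longrightarrow> (d has_real_derivative d2 x) (at x within {0..})"
proof -
  from assms obtain D :: "nat \<Rightarrow> real \<Rightarrow> real" where D: "D 0 = g"
    "\<forall>n. \<forall>x\<in>{0..}. (D n has_real_derivative D (Suc n) x) (at x within {0..})"
    unfolding smooth_on_def by blast
  show ?thesis
  proof (rule that[of "D 1" "D 2"])
    fix x :: real assume "x \<ge> 0"
    then show "(g has_real_derivative D 1 x) (at x within {0..})" using D(2) D(1) by (metis One_nat_def atLeast_iff)
  next
    fix x :: real assume "x \<ge> 0"
    then show "(D 1 has_real_derivative D 2 x) (at x within {0..})" using D(2)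
      by (metis One_nat_def Suc_1 atLeast_iff)
  qed
qed

lemma pv_eq:
  assumes g1d: "\<And>x. x \<ge> 0 \<Longrightarrow> (g1 has_real_derivative d1 x) (at x within {0..})"
    and g2d: "\<And>x. x \<ge> 0 \<Longrightarrow> (g2 has_real_derivative e1 x) (at x within {0..})"
    and s: "s \<ge> 0"
  shows "profile_vel g1 g2 s = (d1 s, e1 s)"
proof -
  have "(profile g1 g2 has_vector_derivative (d1 s, e1 s)) (at s within {0..})"
    unfolding profile_def
    by (rule has_vector_derivative_Pair)
       (use g1d[OF s] g2d[OF s] in \<open>simp_all add: has_real_derivative_iff_has_vector_derivative\<close>)
  then show ?thesis unfolding profile_vel_def by (rule vector_derivative_within[OF not_bot0[OF s]])
qed

theorem theoremB:
  fixes g1 g2 :: "real \<Rightarrow> real" and c :: real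
  assumes smooth1: "smooth_on {0..} g1"
      and smooth2: "smooth_on {0..} g2"
      and regular: "\<forall>s\<ge>0. profile_vel g1 g2 s \<noteq> 0"
      and pos: "\<forall>s\<ge>0. g1 s > 0 \<and> g2 s > 0"
      and complete: "filterlim (hyp_length_upto g1 g2) at_top at_top"
      and c_pos: "c > 0"
      and on_cone: "rev_end g1 g2 \<subseteq> cone_region c"
  shows "parabolic_rev_end g1 g2"
proof -
  obtain d1 d2 where g1d: "\<And>x. x \<ge> 0 \<Longrightarrow> (g1 has_real_derivative d1 x) (at x within {0..})"
    and d1d: "\<And>x. x \<ge> 0 \<Longrightarrow> (d1 has_real_derivative d2 x) (at x within {0..})"
    using smooth_get[OF smooth1] by blast
  obtain e1 e2 where g2d: "\<And>x. x \<ge> 0 \<Longrightarrow> (g2 has_real_derivative e1 x) (at x within {0..})"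
    and e1d: "\<And>x. x \<ge> 0 \<Longrightarrow> (e1 has_real_derivative e2 x) (at x within {0..})"
    using smooth_get[OF smooth2] by blast
  have nz: "(d1 s, e1 s) \<noteq> (0,0)" if "s \<ge> 0" for s
  proof -
    have "profile_vel g1 g2 s \<noteq> 0" using regular that by blast
    then show ?thesis using pv_eq[OF g1d g2d that] by (simp add: zero_prod_def)
  qed
  have cone: "c * g1 s \<le> g2 s" if s: "s \<ge> 0" for s
  proof -
    have "rev_immersion g1 g2 (s, 0) \<in> rev_end g1 g2"
      unfolding rev_end_def using s by (intro imageI) auto
    then have "rev_immersion g1 g2 (s, 0) \<in> cone_region c" using on_cone by blast
    then have "g2 s \<ge> c * sqrt ((g1 s)\<^sup>2)" unfolding cone_region_def rev_immersion_def by simp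
    moreover have "g1 s > 0" using pos s by simp
    ultimately show ?thesis by simp
  qed
  interpret prof2 g1 g2 d1 d2 e1 e2 c
    by unfold_locales (use g1d d1d g2d e1d nz pos cone complete c_pos in auto)
  show ?thesis
    unfolding parabolic_rev_end_def
  proof (intro allI impI ballI)
    fix u v and p :: "real \<times> real"
    assume h: "bounded_harmonic_on_rev_end g1 g2 u \<and> bounded_harmonic_on_rev_end g1 g2 v \<and>
      (\<forall>\<theta>. u (0, \<theta>) = v (0, \<theta>))" and p: "p \<in> {0..} \<times> UNIV"
    have p0: "fst p \<ge> 0" using p by (auto simp: mem_Times_iff)
    have "u p \<le> v p" using le_main[of u v p] h p0 by auto
    moreover have "v p \<le> u p" using le_main[of v u p] h p0 by auto
    ultimately show "u p = v p" by simp
  qed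
qed

end
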